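(* Let $\mathcal{P}$ be a $\delta^+$-common vertex property with associated constant $d(\mathcal{P})$, let $k\geq 1$, $\ell\geq 2$, and let $G$ be a finite digraph with $\delta^+(G)\geq d(\mathcal{P})+2k\ell^k$. Then $G$ contains a subgraph $B$ isomorphic to $B^+_{k,\ell}$ such that every leaf of $B$ satisfies $\mathcal{P}$ in $G$.
   Context: Digraphs are finite, have no loops and no multiple copies of the same edge, but may contain two edges in opposite directions between a pair of vertices. $\delta^+(G)$ is the minimum out-degree. A vertex property $\mathcal{P}$ (a property of a pair (digraph, vertex of it)) is $\delta^+$-common if (i) there is an integer $d=d(\mathcal{P})$ such that every digraph $G$ with $\delta^+(G)\geq d$ contains a vertex satisfying $\mathcal{P}$ in $G$, and (ii) $\mathcal{P}$ is anti-monotone: whenever $H$ is a subgraph of $G$ and $v\in V(H)$ satisfies $\mathcal{P}$ in $H$, then $v$ satisfies $\mathcal{P}$ in $G$. $B^+_{k,\ell}$ is the complete $\ell$-ary tree of depth $k$ (distance from root to leaves $k$) with all edges oriented away from the root; its leaves are the $\ell^k$ vertices at depth $k$. *)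

theory Defs
  imports Main
begin

definition digraph :: "'a set \<Rightarrow> ('a \<times> 'a) set \<Rightarrow> bool" where
  "digraph V E \<longleftrightarrow> finite V \<and> E \<subseteq> V \<times> V \<and> (\<forall>v. (v, v) \<notin> E)"

definition out_degree :: "('a \<times> 'a) set \<Rightarrow> 'a \<Rightarrow> nat" where
  "out_degree E v = card {w. (v, w) \<in> E}"

text \<open>\<delta>^+(G) \<ge> d; digraphs are taken to be nonempty, so the minimum exists.\<close>
definition min_outdeg_ge :: "'a set \<Rightarrow> ('a \<times> 'a) set \<Rightarrow> nat \<Rightarrow> bool" where
  "min_outdeg_ge V E d \<longleftrightarrow> V \<noteq> {} \<and> (\<forall>v\<in>V. out_degree E v \<ge> d)"

definition subgraph :: "'a set \<Rightarrow> ('a \<times> 'a) set \<Rightarrow> 'a set \<Rightarrow> ('a \<times> 'a) set \<Rightarrow> bool" where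
  "subgraph VH EH V E \<longleftrightarrow> VH \<subseteq> V \<and> EH \<subseteq> E \<and> EH \<subseteq> VH \<times> VH"

definition delta_common_with :: "('a set \<Rightarrow> ('a \<times> 'a) set \<Rightarrow> 'a \<Rightarrow> bool) \<Rightarrow> nat \<Rightarrow> bool" where
  "delta_common_with P d \<longleftrightarrow>
     (\<forall>V E. digraph V E \<and> min_outdeg_ge V E d \<longrightarrow> (\<exists>v\<in>V. P V E v)) \<and>
     (\<forall>V E VH EH v. digraph V E \<and> subgraph VH EH V E \<and> v \<in> VH \<and> P VH EH v \<longrightarrow> P V E v)"

text \<open>B^+_{k,l}: vertices are words of length \<le> k over {0..<l}; edges s \<rightarrow> s @ [i].\<close>
definition out_tree_V :: "nat \<Rightarrow> nat \<Rightarrow> nat list set" where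
  "out_tree_V k l = {s. length s \<le> k \<and> set s \<subseteq> {0..<l}}"

definition out_tree_E :: "nat \<Rightarrow> nat \<Rightarrow> (nat list \<times> nat list) set" where
  "out_tree_E k l = {(s, s @ [i]) | s i. length s < k \<and> set s \<subseteq> {0..<l} \<and> i < l}"

definition out_tree_leaves :: "nat \<Rightarrow> nat \<Rightarrow> nat list set" where
  "out_tree_leaves k l = {s. length s = k \<and> set s \<subseteq> {0..<l}}"

definition digraph_iso :: "('b \<Rightarrow> 'a) \<Rightarrow> 'b set \<Rightarrow> ('b \<times> 'b) set \<Rightarrow> 'a set \<Rightarrow> ('a \<times> 'a) set \<Rightarrow> bool" where
  "digraph_iso f V1 E1 V2 E2 \<longleftrightarrow> bij_betw f V1 V2 \<and>
     (\<forall>x\<in>V1. \<forall>y\<in>V1. (x, y) \<in> E1 \<longleftrightarrow> (f x, f y) \<in> E2)"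

end

theory Submission
  imports Defs
begin

lemma tree_leaves_card: "card (out_tree_leaves j l) = l ^ j"
  and tree_leaves_finite: "finite (out_tree_leaves j l)"
  using card_lists_length_eq[of "{0..<l}" j] finite_lists_length_eq[of "{0..<l}" j]
  unfolding out_tree_leaves_def by (auto simp: conj_commute)

lemma tree_V_finite: "finite (out_tree_V j l)"
  using finite_lists_length_le[of "{0..<l}" j] unfolding out_tree_V_def
  by (auto simp: conj_commute)

lemma tree_V_Suc: "out_tree_V (Suc j) l = out_tree_V j l \<union> out_tree_leaves (Suc j) l"
  unfolding out_tree_V_def out_tree_leaves_def by auto

lemma tree_V_card: assumes "l \<ge> 2" shows "card (out_tree_V j l) < 2 * l ^ j"
proof (induction j)
  case 0
  have "out_tree_V 0 l = {[]}" unfolding out_tree_V_def by auto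
  then show ?case using assms by simp
next
  case (Suc j)
  have "card (out_tree_V (Suc j) l) \<le> card (out_tree_V j l) + card (out_tree_leaves (Suc j) l)"
    unfolding tree_V_Suc by (rule card_Un_le)
  also have "\<dots> < 2 * l ^ j + l ^ Suc j" using Suc tree_leaves_card by simp
  also have "\<dots> \<le> 2 * l ^ Suc j" using assms by simp
  finally show ?case .
qed

lemma sdr:
  "finite I \<Longrightarrow> finite U \<Longrightarrow> (\<And>x. x\<in>I \<Longrightarrow> finite (C x) \<and> card I + card U \<le> card (C x))
   \<Longrightarrow> \<exists>g. inj_on g I \<and> (\<forall>x\<in>I. g x \<in> C x - U)"
proof (induction I rule: finite_induct)
  case empty
  then show ?case by auto
next
  case (insert x I)
  have "\<And>y. y\<in>I \<Longrightarrow> finite (C y) \<and> card I + card U \<le> card (C y)"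
    using insert.prems(2) insert.hyps by fastforce
  then obtain g where g: "inj_on g I" "\<forall>y\<in>I. g y \<in> C y - U"
    using insert.IH insert.prems(1) by blast
  have "card (U \<union> g ` I) \<le> card U + card I"
    using card_Un_le[of U "g ` I"] card_image_le[OF insert.hyps(1), of g] by linarith
  also have "\<dots> < card (C x)" using insert.prems(2)[of x] insert.hyps by simp
  finally have "\<not> C x \<subseteq> U \<union> g ` I"
    using insert.prems(1) insert.hyps(1) by (meson card_mono finite_UnI finite_imageI not_le)
  then obtain y where y: "y \<in> C x" "y \<notin> U" "y \<notin> g ` I" by blast
  have "inj_on (g(x:=y)) (insert x I)"
    using g(1) y(3) insert.hyps(2) by (auto simp: inj_on_def)
  moreover have "\<forall>z\<in>insert x I. (g(x:=y)) z \<in> C z - U"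
    using g(2) y insert.hyps(2) by auto
  ultimately show ?case by blast
qed

fun lev :: "'a set \<Rightarrow> ('a \<times> 'a) set \<Rightarrow> ('a set \<Rightarrow> ('a \<times> 'a) set \<Rightarrow> 'a \<Rightarrow> bool) \<Rightarrow> nat \<Rightarrow> nat \<Rightarrow> 'a set" where
  "lev V E P c 0 = {v\<in>V. P V E v}"
| "lev V E P c (Suc i) = {v\<in>V. c \<le> card ({w. (v, w) \<in> E} \<inter> lev V E P c i)}"

lemma lev_sub: "lev V E P c i \<subseteq> V"
  by (cases i) auto

lemma lev_nonempty:
  assumes dc: "delta_common_with P d" and k: "k \<ge> 1" and c: "c \<ge> 1"
    and G: "digraph V E" and deg: "min_outdeg_ge V E (d + k * c)"
  shows "lev V E P c k \<noteq> {}"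
proof
  assume empty: "lev V E P c k = {}"
  let ?L = "lev V E P c"
  define N where "N v = {w. (v, w) \<in> E}" for v
  define H where "H = {(v, w) \<in> E. \<forall>i<k. w \<in> ?L i \<longrightarrow> v \<in> ?L (Suc i)}"
  have finV: "finite V" and EV: "E \<subseteq> V \<times> V" and noloop: "\<And>v. (v,v) \<notin> E"
    using G unfolding digraph_def by auto
  have finN: "finite (N v)" for v
    by (rule finite_subset[of _ V]) (use EV finV in \<open>auto simp: N_def\<close>)
  define NH where "NH v = {w. (v, w) \<in> H}" for v
  have NHbig: "card (NH v) \<ge> d + k" if v: "v \<in> V" for v
  proof -
    define D where "D i = (if v \<notin> ?L (Suc i) then N v \<inter> ?L i else {})" for i
    have sub: "N v \<subseteq> NH v \<union> (\<Union>i\<in>{..<k}. D i)"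
      unfolding N_def NH_def H_def D_def by auto
    have Dc: "card (D i) \<le> c - 1" for i
      using v unfolding D_def N_def by auto
    have "card (N v) \<le> card (NH v \<union> (\<Union>i\<in>{..<k}. D i))"
      by (rule card_mono) (use sub finN in \<open>auto simp: NH_def H_def N_def D_def\<close>)
    also have "\<dots> \<le> card (NH v) + card (\<Union>i\<in>{..<k}. D i)" by (rule card_Un_le)
    also have "card (\<Union>i\<in>{..<k}. D i) \<le> (\<Sum>i\<in>{..<k}. card (D i))" by (rule card_UN_le) simp
    also have "\<dots> \<le> k * (c - 1)" using sum_bounded_above[of "{..<k}" "\<lambda>i. card (D i)" "c - 1"] Dc by simp
    finally have "card (N v) \<le> card (NH v) + k * (c - 1)" by simp
    moreover have "card (N v) \<ge> d + k * c"
      using deg v unfolding min_outdeg_ge_def out_degree_def N_def by auto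
    moreover have "k * c = k * (c - 1) + k" using c by (cases c) auto
    ultimately show ?thesis by linarith
  qed
  define Z where "Z = {v\<in>V. \<forall>i<k. v \<notin> ?L i}"
  have Zempty: "Z = {}"
  proof (rule ccontr)
    assume Zne: "Z \<noteq> {}"
    define HZ where "HZ = H \<inter> Z \<times> Z"
    have closed: "w \<in> Z" if "v \<in> Z" "(v, w) \<in> H" for v w
    proof -
      have w: "w \<in> V" using that EV unfolding H_def by auto
      { fix i assume i: "i < k" "w \<in> ?L i"
        then have "v \<in> ?L (Suc i)" using that unfolding H_def by auto
        moreover have "Suc i < k \<or> Suc i = k" using i by linarith
        ultimately have False using that(1) empty unfolding Z_def by auto }
      then show ?thesis using w unfolding Z_def by auto
    qed
    have sg: "subgraph Z HZ V E" unfolding subgraph_def HZ_def H_def Z_def by auto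
    have dg: "digraph Z HZ" using finV noloop unfolding digraph_def HZ_def H_def Z_def by auto
    have "min_outdeg_ge Z HZ d"
      unfolding min_outdeg_ge_def
    proof (intro conjI ballI Zne)
      fix v assume v: "v \<in> Z"
      have "{w. (v, w) \<in> HZ} = NH v" using closed v unfolding HZ_def NH_def by auto
      then show "d \<le> out_degree HZ v" using NHbig[of v] v unfolding out_degree_def Z_def by auto
    qed
    then obtain v where v: "v \<in> Z" "P Z HZ v" using dc dg unfolding delta_common_with_def by blast
    then have "P V E v" using dc G sg unfolding delta_common_with_def by blast
    then have "v \<in> ?L 0" using v(1) unfolding Z_def by auto
    then show False using v(1) k unfolding Z_def by auto
  qed
  have Q: "\<forall>v\<in>V. \<exists>j. n \<le> j \<and> j < k \<and> v \<in> ?L j" for n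
  proof (induction n)
    case 0
    then show ?case using Zempty unfolding Z_def by auto
  next
    case (Suc n)
    show ?case
    proof
      fix v assume v: "v \<in> V"
      have "NH v \<noteq> {}" using NHbig[OF v] k by auto
      then obtain w where w: "(v, w) \<in> H" unfolding NH_def by auto
      then have "w \<in> V" using EV unfolding H_def by auto
      then obtain j where j: "n \<le> j" "j < k" "w \<in> ?L j" using Suc by blast
      then have "v \<in> ?L (Suc j)" using w unfolding H_def by auto
      moreover have "Suc j \<noteq> k" using empty calculation by auto
      ultimately show "\<exists>j. Suc n \<le> j \<and> j < k \<and> v \<in> ?L j" using j by (intro exI[of _ "Suc j"]) auto
    qed
  qed
  obtain v where "v \<in> V" using deg unfolding min_outdeg_ge_def by auto
  then show False using Q[of k] by auto
qed

lemma embed: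
  assumes G: "digraph V E" and r: "r \<in> lev V E P c k" and c: "c = 2 * l ^ k"
    and l: "l \<ge> 2"
  shows "j \<le> k \<Longrightarrow> \<exists>f. inj_on f (out_tree_V j l) \<and>
     (\<forall>s\<in>out_tree_V j l. f s \<in> lev V E P c (k - length s)) \<and>
     (\<forall>s i. length s < j \<longrightarrow> set s \<subseteq> {0..<l} \<longrightarrow> i < l \<longrightarrow> (f s, f (s @ [i])) \<in> E)"
proof (induction j)
  case 0
  have "out_tree_V 0 l = {[]}" unfolding out_tree_V_def by auto
  then show ?case using r by (intro exI[of _ "\<lambda>_. r"]) auto
next
  case (Suc j)
  let ?L = "lev V E P c"
  have finV: "finite V" and EV: "E \<subseteq> V \<times> V"
    using G unfolding digraph_def by auto
  obtain f where f: "inj_on f (out_tree_V j l)"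
    "\<forall>s\<in>out_tree_V j l. f s \<in> ?L (k - length s)"
    "\<forall>s i. length s < j \<longrightarrow> set s \<subseteq> {0..<l} \<longrightarrow> i < l \<longrightarrow> (f s, f (s @ [i])) \<in> E"
    using Suc by auto
  define I where "I = out_tree_leaves (Suc j) l"
  define U where "U = f ` out_tree_V j l"
  define C where "C t = {w. (f (butlast t), w) \<in> E} \<inter> ?L (k - Suc j)" for t
  have disj: "out_tree_V j l \<inter> I = {}" unfolding I_def out_tree_V_def out_tree_leaves_def by auto
  have "card I + card U \<le> card I + card (out_tree_V j l)"
    unfolding U_def using card_image_le[OF tree_V_finite] by simp
  also have "\<dots> = card (out_tree_V (Suc j) l)"
    unfolding tree_V_Suc I_def using disj tree_V_finite tree_leaves_finite
    by (simp add: card_Un_disjoint I_def)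
  also have "\<dots> < 2 * l ^ Suc j" by (rule tree_V_card[OF l])
  also have "\<dots> \<le> c" unfolding c
  proof -
    have "l ^ Suc j \<le> l ^ k" by (rule power_increasing) (use Suc.prems l in auto)
    then show "2 * l ^ Suc j \<le> 2 * l ^ k" by (rule mult_le_mono2)
  qed
  finally have cardIU: "card I + card U \<le> c" by simp
  have "\<forall>t\<in>I. finite (C t) \<and> card I + card U \<le> card (C t)"
  proof
    fix t assume t: "t \<in> I"
    have bt: "butlast t \<in> out_tree_V j l" "length (butlast t) = j"
      using t unfolding I_def out_tree_leaves_def out_tree_V_def
      by (auto dest: in_set_butlastD)
    then have "f (butlast t) \<in> ?L (Suc (k - Suc j))"
      using f(2) Suc.prems by (metis Suc_diff_Suc Suc_le_lessD)
    then have "c \<le> card (C t)" unfolding C_def by simp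
    moreover have "finite (C t)" unfolding C_def
      by (rule finite_subset[of _ V]) (use EV finV in auto)
    ultimately show "finite (C t) \<and> card I + card U \<le> card (C t)" using cardIU by simp
  qed
  then obtain g where g: "inj_on g I" "\<forall>t\<in>I. g t \<in> C t - U"
    using sdr[of I U C] tree_leaves_finite tree_V_finite unfolding I_def U_def by blast
  define f' where "f' t = (if length t \<le> j then f t else g t)" for t
  have inI: "t \<in> I" if "t \<in> out_tree_V (Suc j) l" "\<not> length t \<le> j" for t
    using that unfolding I_def out_tree_V_def out_tree_leaves_def by auto
  have inV: "t \<in> out_tree_V j l" if "t \<in> out_tree_V (Suc j) l" "length t \<le> j" for t
    using that unfolding out_tree_V_def by auto
  have "inj_on f' (out_tree_V (Suc j) l)"
  proof (rule inj_onI)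
    fix s t assume s: "s \<in> out_tree_V (Suc j) l" and t: "t \<in> out_tree_V (Suc j) l" and eq: "f' s = f' t"
    show "s = t"
    proof (cases "length s \<le> j"; cases "length t \<le> j")
      assume "length s \<le> j" "length t \<le> j"
      then show ?thesis using eq inV[OF s] inV[OF t] f(1) unfolding f'_def by (auto dest: inj_onD)
    next
      assume "\<not> length s \<le> j" "\<not> length t \<le> j"
      then show ?thesis using eq inI[OF s] inI[OF t] g(1) unfolding f'_def by (auto dest: inj_onD)
    next
      assume "length s \<le> j" "\<not> length t \<le> j"
      moreover have "g t \<notin> U" using g(2) inI[OF t] \<open>\<not> length t \<le> j\<close> by blast
      moreover have "f s \<in> U" unfolding U_def using inV[OF s] \<open>length s \<le> j\<close> by blast
      moreover have "f s = g t" using eq \<open>length s \<le> j\<close> \<open>\<not> length t \<le> j\<close> unfolding f'_def by simp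
      ultimately show ?thesis by (simp only:)
    next
      assume "\<not> length s \<le> j" "length t \<le> j"
      then show ?thesis using eq inI[OF s] inV[OF t] g(2) unfolding f'_def U_def by force
    qed
  qed
  moreover have "\<forall>s\<in>out_tree_V (Suc j) l. f' s \<in> ?L (k - length s)"
  proof
    fix s assume s: "s \<in> out_tree_V (Suc j) l"
    show "f' s \<in> ?L (k - length s)"
    proof (cases "length s \<le> j")
      case True
      then show ?thesis using f(2) inV[OF s] unfolding f'_def by auto
    next
      case False
      then have "length s = Suc j" using s unfolding out_tree_V_def by auto
      then show ?thesis using False g(2) inI[OF s False] unfolding f'_def C_def by auto
    qed
  qed
  moreover have "\<forall>s i. length s < Suc j \<longrightarrow> set s \<subseteq> {0..<l} \<longrightarrow> i < l \<longrightarrow> (f' s, f' (s @ [i])) \<in> E"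
  proof (intro allI impI)
    fix s i assume s: "length s < Suc j" "set s \<subseteq> {0..<l}" "i < l"
    show "(f' s, f' (s @ [i])) \<in> E"
    proof (cases "length s < j")
      case True
      then show ?thesis using f(3) s unfolding f'_def by auto
    next
      case False
      then have len: "length s = j" using s by auto
      have "s @ [i] \<in> I" using len s unfolding I_def out_tree_leaves_def by auto
      then have "g (s @ [i]) \<in> C (s @ [i])" using g(2) by blast
      then show ?thesis using len unfolding f'_def C_def by auto
    qed
  qed
  ultimately show ?case by blast
qed

theorem theorem3p5:
  fixes P :: "'a set \<Rightarrow> ('a \<times> 'a) set \<Rightarrow> 'a \<Rightarrow> bool"
    and d k l :: nat and V :: "'a set" and E :: "('a \<times> 'a) set"
  assumes "delta_common_with P d"
    and "k \<ge> 1" and "l \<ge> 2"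
    and "digraph V E"
    and "min_outdeg_ge V E (d + 2 * k * l ^ k)"
  shows "\<exists>VB EB f. subgraph VB EB V E \<and> digraph_iso f (out_tree_V k l) (out_tree_E k l) VB EB \<and>
           (\<forall>s\<in>out_tree_leaves k l. P V E (f s))"
proof -
  define c where "c = 2 * l ^ k"
  have c1: "c \<ge> 1" unfolding c_def using assms(3) by simp
  have "min_outdeg_ge V E (d + k * c)" 
  proof -
    have e: "2 * k * l ^ k = k * c" unfolding c_def by simp
    show ?thesis using assms(5) unfolding e .
  qed
  then have "lev V E P c k \<noteq> {}" using lev_nonempty[OF assms(1,2) c1 assms(4)] by blast
  then obtain r where r: "r \<in> lev V E P c k" by auto
  obtain f where f: "inj_on f (out_tree_V k l)"
     "\<forall>s\<in>out_tree_V k l. f s \<in> lev V E P c (k - length s)"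
     "\<forall>s i. length s < k \<longrightarrow> set s \<subseteq> {0..<l} \<longrightarrow> i < l \<longrightarrow> (f s, f (s @ [i])) \<in> E"
    using embed[OF assms(4) r c_def assms(3), of k] by auto
  define VB where "VB = f ` out_tree_V k l"
  define EB where "EB = (\<lambda>(a, b). (f a, f b)) ` out_tree_E k l"
  have TE: "out_tree_E k l \<subseteq> out_tree_V k l \<times> out_tree_V k l"
    unfolding out_tree_E_def out_tree_V_def by auto
  have "subgraph VB EB V E"
    unfolding subgraph_def
  proof (intro conjI)
    show "VB \<subseteq> V"
    proof
      fix x assume "x \<in> VB"
      then obtain s where s: "s \<in> out_tree_V k l" "x = f s" unfolding VB_def by blast
      then have "f s \<in> lev V E P c (k - length s)" using f(2) by blast
      then show "x \<in> V" using s lev_sub[of V E P c "k - length s"] by blast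
    qed
    show "EB \<subseteq> E"
    proof
      fix p assume "p \<in> EB"
      then obtain s i where s: "length s < k" "set s \<subseteq> {0..<l}" "i < l" "p = (f s, f (s @ [i]))"
        unfolding EB_def out_tree_E_def by auto
      then show "p \<in> E" using f(3) by blast
    qed
    show "EB \<subseteq> VB \<times> VB" unfolding EB_def VB_def using TE by auto
  qed
  moreover have "digraph_iso f (out_tree_V k l) (out_tree_E k l) VB EB"
    unfolding digraph_iso_def
  proof (intro conjI ballI)
    show "bij_betw f (out_tree_V k l) VB" unfolding VB_def using f(1) by (simp add: bij_betw_def)
    fix x y assume x: "x \<in> out_tree_V k l" and y: "y \<in> out_tree_V k l"
    show "((x, y) \<in> out_tree_E k l) = ((f x, f y) \<in> EB)"
    proof
      assume "(x, y) \<in> out_tree_E k l" then show "(f x, f y) \<in> EB" unfolding EB_def by force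
    next
      assume "(f x, f y) \<in> EB"
      then obtain a b where ab: "(a, b) \<in> out_tree_E k l" "f a = f x" "f b = f y" unfolding EB_def by auto
      then have "a = x" "b = y" using TE x y f(1) by (auto dest: inj_onD)
      then show "(x, y) \<in> out_tree_E k l" using ab by simp
    qed
  qed
  moreover have "\<forall>s\<in>out_tree_leaves k l. P V E (f s)"
  proof
    fix s assume s: "s \<in> out_tree_leaves k l"
    then have "s \<in> out_tree_V k l" "length s = k" unfolding out_tree_leaves_def out_tree_V_def by auto
    then show "P V E (f s)" using f(2) by fastforce
  qed
  ultimately show ?thesis by blast
qed

end
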